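(* Let $T>0$. There is a constant $C$ such that for any two $\mathbf{u},\mathbf{w}\in C([0,T];X)$, all $t\in[0,T]$ and $\mathbf{x}\in\Omega$, $$|\mathcal{L}^\epsilon[\mathbf{u}](t,\mathbf{x})-\mathcal{L}^\epsilon[\mathbf{w}](t,\mathbf{x})|\le C\,\|\mathbf{u}-\mathbf{w}\|_{C([0,T];X)}\int_\Omega\frac{\rho^\epsilon(\mathbf{y},\mathbf{x})}{|\mathbf{y}-\mathbf{x}|}\,d\mathbf{y},$$ where $C$ is independent of $\mathbf{u}$ and $\mathbf{w}$.
   Context: Let $d\in\{2,3\}$ and let $\Omega\subset\mathbb{R}^d$ be a bounded domain. Fix a horizon $\epsilon>0$, a length $L>0$ and a bond stiffness $\overline{\mu}>0$. Let $\omega_d$ be the volume of the unit ball and $V_d^\epsilon=\omega_d\epsilon^d$. Let $J:[0,\infty)\to[0,\infty)$ be positive and radially decreasing on $[0,1)$ with $J(0)=M$ and $J(r)=0$ for $r\ge1$; $J^\epsilon(s)=J(s/\epsilon)$; the kernel is $\rho^\epsilon(\mathbf{y},\mathbf{x})=\chi_\Omega(\mathbf{y})J^\epsilon(|\mathbf{y}-\mathbf{x}|)/(\epsilon V_d^\epsilon)$. For a time-dependent displacement $\mathbf{u}$ and $\mathbf{y}\ne\mathbf{x}$, $\mathbf{e}=(\mathbf{y}-\mathbf{x})/|\mathbf{y}-\mathbf{x}|$, $S(\mathbf{y},\mathbf{x},\mathbf{u}(t))=(\mathbf{u}(t,\mathbf{y})-\mathbf{u}(t,\mathbf{x}))\cdot\mathbf{e}/|\mathbf{y}-\mathbf{x}|$,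 $S^*(t,\mathbf{y},\mathbf{x},\mathbf{u})=\max_{0\le\tau\le t}S(\mathbf{y},\mathbf{x},\mathbf{u}(\tau))$, $r^*=\sqrt{|\mathbf{y}-\mathbf{x}|/L}\,S^*$. The failure envelope is $g'$ for a convex–concave potential $g$ with $0<r^L\le r^C<r^F$: $g'(r)=\overline{\mu}r$ for $r\le r^L$, nonlinear beyond $r^L$ (hardening up to $r^C$), decreasing to $0$ at $r^F$ and $g'=0$ for $r\ge r^F$ (e.g. bilinear: $g'(r)=\overline{\mu}r$ for $r<r^C$, $\overline{\mu}r^C\frac{r^F-r}{r^F-r^C}$ on $[r^C,r^F]$, $0$ beyond). The two-point phase field is $\gamma(\mathbf{u})(\mathbf{y},\mathbf{x},t)=g'(r^* )/(\overline{\mu}r^* )\in[0,1]$ ($=1$ if $r^*\le r^L$). The stiffness is $\mu(\gamma)=\overline{\mu}$ if $S(\mathbf{y},\mathbf{x},\mathbf{u}(t))\le0$ and $\overline{\mu}\gamma(\mathbf{u})(\mathbf{y},\mathbf{x},t)$ if $S>0$. The bond force is $\boldsymbol{f}^\epsilon(t,\mathbf{y},\mathbf{x},\mathbf{u})=\rho^\epsilon(\mathbf{y},\mathbf{x})\mu(\gamma(\mathbf{u})(\mathbf{y},\mathbf{x},t))S(\mathbf{y},\mathbf{x},\mathbf{u}(t))\mathbf{e}$ and $\mathcal{L}^\epsilon[\mathbf{u}](t,\mathbf{x})=-\int_\Omega\boldsymbol{f}^\epsilon(t,\mathbf{y},\mathbf{x},\mathbf{u})\,d\mathbf{y}$. $X$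 is the subspace of $L^\infty(\Omega;\mathbb{R}^d)$ $L^2$-orthogonal to the rigid motions $\{\mathbb{Q}\mathbf{x}+\mathbf{c}:\mathbb{Q}^T=-\mathbb{Q}\}$, and $C([0,T];X)$ has norm $\sup_t\|\mathbf{u}(t)\|_{L^\infty}$.
   Formalization: The failure envelope $g'$ is moreover Lipschitz continuous on $[0,\infty)$, with one constant for all its arguments. The statement above fails without it. *)

theory Defs
  imports "HOL-Analysis.Analysis"
begin

definition bondS :: "'a::euclidean_space \<Rightarrow> 'a \<Rightarrow> ('a \<Rightarrow> 'a) \<Rightarrow> real" where
  "bondS y x v = inner (v y - v x) (sgn (y - x)) / norm (y - x)"

definition Sstar :: "real \<Rightarrow> 'a::euclidean_space \<Rightarrow> 'a \<Rightarrow> (real \<Rightarrow> 'a \<Rightarrow> 'a) \<Rightarrow> real" where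
  "Sstar t y x u = (SUP \<tau>\<in>{0..t}. bondS y x (u \<tau>))"

definition rstar :: "real \<Rightarrow> real \<Rightarrow> 'a::euclidean_space \<Rightarrow> 'a \<Rightarrow> (real \<Rightarrow> 'a \<Rightarrow> 'a) \<Rightarrow> real" where
  "rstar L t y x u = sqrt (norm (y - x) / L) * Sstar t y x u"

definition phase :: "(real \<Rightarrow> real) \<Rightarrow> real \<Rightarrow> real \<Rightarrow> real \<Rightarrow> (real \<Rightarrow> 'a::euclidean_space \<Rightarrow> 'a) \<Rightarrow> 'a \<Rightarrow> 'a \<Rightarrow> real \<Rightarrow> real" where
  "phase gp mu rL L u y x t =
     (let r = rstar L t y x u in if r \<le> rL then 1 else gp r / (mu * r))"

definition stiff :: "(real \<Rightarrow> real) \<Rightarrow> real \<Rightarrow> real \<Rightarrow> real \<Rightarrow> (real \<Rightarrow> 'a::euclidean_space \<Rightarrow> 'a) \<Rightarrow> 'a \<Rightarrow> 'a \<Rightarrow> real \<Rightarrow> real" where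
  "stiff gp mu rL L u y x t =
     (if bondS y x (u t) \<le> 0 then mu else mu * phase gp mu rL L u y x t)"

definition rho :: "'a::euclidean_space set \<Rightarrow> (real \<Rightarrow> real) \<Rightarrow> real \<Rightarrow> 'a \<Rightarrow> 'a \<Rightarrow> real" where
  "rho \<Omega> J \<epsilon> y x = indicator \<Omega> y * J (norm (y - x) / \<epsilon>)
      / (\<epsilon> * (measure lborel (ball (0::'a) 1) * \<epsilon> ^ DIM('a)))"

definition force :: "'a::euclidean_space set \<Rightarrow> (real \<Rightarrow> real) \<Rightarrow> real \<Rightarrow> (real \<Rightarrow> real) \<Rightarrow> real \<Rightarrow> real \<Rightarrow> real
     \<Rightarrow> real \<Rightarrow> 'a \<Rightarrow> 'a \<Rightarrow> (real \<Rightarrow> 'a \<Rightarrow> 'a) \<Rightarrow> 'a" where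
  "force \<Omega> J \<epsilon> gp mu rL L t y x u =
     (rho \<Omega> J \<epsilon> y x * stiff gp mu rL L u y x t * bondS y x (u t)) *\<^sub>R sgn (y - x)"

definition Leps :: "'a::euclidean_space set \<Rightarrow> (real \<Rightarrow> real) \<Rightarrow> real \<Rightarrow> (real \<Rightarrow> real) \<Rightarrow> real \<Rightarrow> real \<Rightarrow> real
     \<Rightarrow> (real \<Rightarrow> 'a \<Rightarrow> 'a) \<Rightarrow> real \<Rightarrow> 'a \<Rightarrow> 'a" where
  "Leps \<Omega> J \<epsilon> gp mu rL L u t x =
     - set_lebesgue_integral lebesgue \<Omega> (\<lambda>y. force \<Omega> J \<epsilon> gp mu rL L t y x u)"

definition rigid_motions :: "('a::euclidean_space \<Rightarrow> 'a) set" where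
  "rigid_motions = {(\<lambda>x. Q x + c) | Q c. linear Q \<and> (\<forall>x y. inner (Q x) y = - inner x (Q y))}"

definition in_X :: "'a::euclidean_space set \<Rightarrow> ('a \<Rightarrow> 'a) \<Rightarrow> bool" where
  "in_X \<Omega> v \<longleftrightarrow> set_borel_measurable lebesgue \<Omega> v \<and> bounded (v ` \<Omega>) \<and>
     (\<forall>r\<in>rigid_motions. set_lebesgue_integral lebesgue \<Omega> (\<lambda>x. inner (v x) (r x)) = 0)"

definition in_CX :: "'a::euclidean_space set \<Rightarrow> real \<Rightarrow> (real \<Rightarrow> 'a \<Rightarrow> 'a) \<Rightarrow> bool" where
  "in_CX \<Omega> T u \<longleftrightarrow> (\<forall>t\<in>{0..T}. in_X \<Omega> (u t)) \<and>
     (\<forall>t\<in>{0..T}. \<forall>e>0. \<exists>\<delta>>0. \<forall>s\<in>{0..T}. \<bar>s - t\<bar> < \<delta> \<longrightarrow> (\<forall>x\<in>\<Omega>. norm (u s x - u t x) \<le> e))"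

definition CXnorm :: "'a::euclidean_space set \<Rightarrow> real \<Rightarrow> (real \<Rightarrow> 'a \<Rightarrow> 'a) \<Rightarrow> real" where
  "CXnorm \<Omega> T u = (SUP t\<in>{0..T}. SUP x\<in>\<Omega>. norm (u t x))"

end

theory Submission
  imports Defs
begin


lemma cball_content:
  fixes x :: "'a::euclidean_space"
  assumes "s \<ge> 0"
  shows "emeasure lborel (cball x s) = ennreal (s ^ DIM('a) * measure lborel (ball (0::'a) 1))"
proof -
  have "emeasure lborel (cball x s) = ennreal (measure lborel (cball x s))"
    using emeasure_lborel_cball_finite[of x s] by (intro emeasure_eq_ennreal_measure) auto
  also have "measure lborel (cball x s) = s ^ DIM('a) * measure lborel (ball (0::'a) 1)"
    using content_cball_conv_ball content_ball_conv_unit_ball assms by metis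
  finally show ?thesis .
qed

lemma term_bound:
  fixes r V :: real and k d :: nat
  assumes "r > 0" "V \<ge> 0" "d \<ge> 2"
  shows "2^(k+1)/r * ((r/2^k)^d * V) \<le> 2 * r^(d-1) * V * (1/2)^k"
proof -
  have e: "(r/2^k)^d = r^d / (2^k)^d" by (simp add: power_divide)
  have "(2::real)^k * 2^k \<le> (2^k)^d"
  proof -
    have "(2::real)^k * 2^k = (2^k)^2" by (simp add: power2_eq_square)
    also have "\<dots> \<le> (2^k)^d" using assms by (intro power_increasing) auto
    finally show ?thesis .
  qed
  hence "r^d / (2^k)^d \<le> r^d / (2^k * 2^k)"
    by (intro divide_left_mono) (use assms in auto)
  hence "2^(k+1)/r * ((r/2^k)^d * V) \<le> 2^(k+1)/r * (r^d / (2^k * 2^k) * V)"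
    unfolding e using assms by (intro mult_left_mono mult_right_mono) auto
  also have "\<dots> = 2 * r^(d-1) * V * (1/2)^k"
  proof -
    have rd: "r^d = r * r^(d-1)" using assms by (cases d) auto
    have "(2::real)^(k+1) = 2 * 2^k" by simp
    moreover have "\<And>p q::real. p > 0 \<Longrightarrow> 2*p/r*(r*q/(p*p)*V) = 2*q*V*(1/p)"
      using assms by (simp add: field_simps)
    ultimately show ?thesis unfolding rd power_one_over by simp
  qed
  finally show ?thesis .
qed

lemma exists_dyadic:
  fixes q :: real
  assumes "q \<ge> 1"
  shows "\<exists>k::nat. 2^k \<le> q \<and> q < 2^(k+1)"
proof -
  obtain n :: nat where n: "q < 2^n" using real_arch_pow[of 2 q] by auto
  define m where "m = (LEAST n::nat. q < 2^n)"
  have m: "q < 2^m" unfolding m_def using n by (rule LeastI)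
  have m0: "m \<noteq> 0" using m assms by (intro notI) auto
  have "\<not> q < 2^(m-1)" unfolding m_def
    by (rule not_less_Least) (use m0 m_def in auto)
  thus ?thesis using m m0 by (intro exI[of _ "m-1"]) auto
qed

lemma inv_norm_integrable:
  fixes x :: "'a::euclidean_space"
  assumes r: "r > 0" and d: "DIM('a) \<ge> 2"
  shows "integrable lborel (\<lambda>y. indicator (cball x r) y / norm (y - x))"
proof -
  define V where "V = measure lborel (ball (0::'a) 1)"
  have V0: "V \<ge> 0" unfolding V_def by simp
  define f where "f k y = ennreal (2^(k+1)/r) * indicator (cball x (r/2^k)) y" for k :: nat and y :: 'a
  have cbm[measurable]: "cball x s \<in> sets borel" for s by simp
  have fm: "f k \<in> borel_measurable lborel" for k unfolding f_def by measurable
  have pw: "ennreal (norm (indicator (cball x r) y / norm (y - x))) \<le> (\<Sum>k. f k y)" for y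
  proof (cases "y \<in> cball x r \<and> y \<noteq> x")
    case False
    thus ?thesis by (auto simp: indicator_def)
  next
    case True
    define a where "a = norm (y - x)"
    have a0: "a > 0" and ar: "a \<le> r" using True unfolding a_def by (auto simp: dist_norm norm_minus_commute)
    obtain k :: nat where k: "2^k \<le> r/a" "r/a < 2^(k+1)" using exists_dyadic[of "r/a"] a0 ar by auto
    have "a \<le> r/2^k" using k(1) a0 by (simp add: field_simps)
    hence yin: "y \<in> cball x (r/2^k)" by (simp add: a_def dist_norm norm_minus_commute)
    have "1/a < 2^(k+1)/r" using k(2) a0 r by (simp add: field_simps)
    hence "ennreal (norm (indicator (cball x r) y / norm (y - x))) \<le> f k y"
      using True yin a0 unfolding f_def a_def[symmetric] by (auto simp: indicator_def intro!: ennreal_leI)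
    also have "f k y \<le> (\<Sum>k. f k y)"
      using sum_le_suminf[OF summableI, of "{k}" "\<lambda>k. f k y"] by simp
    finally show ?thesis .
  qed
  have "(\<integral>\<^sup>+y. ennreal (norm (indicator (cball x r) y / norm (y - x))) \<partial>lborel) \<le> (\<integral>\<^sup>+y. (\<Sum>k. f k y) \<partial>lborel)"
    by (intro nn_integral_mono pw)
  also have "\<dots> = (\<Sum>k. integral\<^sup>N lborel (f k))" by (rule nn_integral_suminf[OF fm])
  also have "\<dots> = (\<Sum>k. ennreal (2^(k+1)/r * ((r/2^k)^DIM('a) * V)))"
  proof (intro suminf_cong)
    fix k :: nat
    have "integral\<^sup>N lborel (f k) = ennreal (2^(k+1)/r) * emeasure lborel (cball x (r/2^k))"
      unfolding f_def by (rule nn_integral_cmult_indicator) simp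
    also have "\<dots> = ennreal (2^(k+1)/r) * ennreal ((r/2^k)^DIM('a) * V)"
      using cball_content[of "r/2^k" x] r unfolding V_def by simp
    also have "\<dots> = ennreal (2^(k+1)/r * ((r/2^k)^DIM('a) * V))"
      by (rule ennreal_mult[symmetric]) (use r V0 in auto)
    finally show "integral\<^sup>N lborel (f k) = ennreal (2^(k+1)/r * ((r/2^k)^DIM('a) * V))" .
  qed
  also have "\<dots> \<le> (\<Sum>k. ennreal (2 * r^(DIM('a)-1) * V * (1/2)^k))"
    by (intro suminf_le summableI ennreal_leI term_bound r V0 d)
  also have "\<dots> = ennreal (\<Sum>k. 2 * r^(DIM('a)-1) * V * (1/2)^k)"
    by (intro suminf_ennreal2) (use r V0 in \<open>auto intro!: summable_mult summable_geometric\<close>)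
  also have "\<dots> < \<infinity>" by simp
  finally have fin: "(\<integral>\<^sup>+y. ennreal (norm (indicator (cball x r) y / norm (y - x))) \<partial>lborel) < \<infinity>" .
  show ?thesis
    by (rule integrableI_bounded[OF _ fin]) measurable
qed

lemma phi_diff:
  fixes gp :: "real \<Rightarrow> real"
  assumes r1: "r1 > 0" and r2: "r2 > 0"
   and bnd: "\<forall>r. r \<ge> 0 \<longrightarrow> 0 \<le> gp r \<and> gp r \<le> mu * r"
   and lip: "\<forall>r s. 0 \<le> r \<and> 0 \<le> s \<longrightarrow> \<bar>gp r - gp s\<bar> \<le> K * \<bar>r - s\<bar>"
  shows "\<bar>gp r1/r1 - gp r2/r2\<bar> * r2 \<le> (K+mu)*\<bar>r1-r2\<bar>"
proof -
  have e: "\<bar>gp r1/r1 - gp r2/r2\<bar> * r2 = \<bar>(gp r1 - gp r2) + (gp r1 / r1) * (r2 - r1)\<bar>"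
  proof -
    have "\<bar>gp r1/r1 - gp r2/r2\<bar> * r2 = \<bar>(gp r1/r1 - gp r2/r2) * r2\<bar>" using r2 by (simp add: abs_mult)
    also have "(gp r1/r1 - gp r2/r2) * r2 = (gp r1 - gp r2) + (gp r1 / r1) * (r2 - r1)"
      using r1 r2 by (simp add: field_simps)
    finally show ?thesis .
  qed
  have a: "\<bar>gp r1 - gp r2\<bar> \<le> K * \<bar>r1 - r2\<bar>" using lip r1 r2 by auto
  have g1: "0 \<le> gp r1" "gp r1 \<le> mu * r1" using bnd r1 by auto
  have b0: "0 \<le> gp r1 / r1" "gp r1 / r1 \<le> mu"
    using g1 r1 by (auto simp: pos_divide_le_eq)
  have b: "\<bar>(gp r1 / r1) * (r2 - r1)\<bar> \<le> mu * \<bar>r1 - r2\<bar>"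
    using b0 by (simp only: abs_mult abs_of_nonneg[OF b0(1)] abs_minus_commute[of r2 r1] mult_right_mono)
  have dd: "(K+mu)*\<bar>r1-r2\<bar> = K*\<bar>r1-r2\<bar> + mu*\<bar>r1-r2\<bar>" by (simp add: distrib_right)
  show ?thesis unfolding e dd using a b abs_triangle_ineq[of "gp r1 - gp r2" "(gp r1 / r1) * (r2 - r1)"]
    by linarith
qed

lemma scalar_key:
  fixes gp :: "real \<Rightarrow> real"
  assumes c: "c > 0" and mu: "mu > 0"
   and S1: "S1 \<le> P1" and S2: "S2 \<le> P2"
   and lin: "\<forall>r. 0 \<le> r \<and> r \<le> rL \<longrightarrow> gp r = mu * r"
   and bnd: "\<forall>r. r \<ge> 0 \<longrightarrow> 0 \<le> gp r \<and> gp r \<le> mu * r"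
   and lip: "\<forall>r s. 0 \<le> r \<and> 0 \<le> s \<longrightarrow> \<bar>gp r - gp s\<bar> \<le> K * \<bar>r - s\<bar>"
  defines "F \<equiv> \<lambda>S P. (if S \<le> 0 then mu else mu * (if c*P \<le> rL then 1 else gp (c*P) / (mu * (c*P)))) * S"
  shows "\<bar>F S1 P1 - F S2 P2\<bar> \<le> mu * \<bar>S1 - S2\<bar> + (K + mu) * \<bar>P1 - P2\<bar>"
proof -
  have pos: "F S P = gp (c*P) / (c*P) * S" if "S > 0" "S \<le> P" for S P
  proof -
    have cP: "c*P > 0" using that c by simp
    show ?thesis
    proof (cases "c*P \<le> rL")
      case True
      hence "gp (c*P) = mu * (c*P)" using lin cP by auto
      thus ?thesis using True that cP c unfolding F_def by simp
    next
      case False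
      thus ?thesis using that mu cP unfolding F_def by simp
    qed
  qed
  have phi: "0 \<le> gp r / r \<and> gp r / r \<le> mu" if "r > 0" for r
  proof -
    have "0 \<le> gp r" "gp r \<le> mu * r" using bnd that by auto
    thus ?thesis using that by (auto simp: pos_divide_le_eq)
  qed
  have neg: "F S P = mu * S" if "S \<le> 0" for S P using that unfolding F_def by simp
  have K0: "K + mu \<ge> 0"
  proof -
    have "\<bar>gp 0 - gp 1\<bar> \<le> K * \<bar>0 - 1\<bar>" using lip[rule_format, of 0 1] by simp
    hence "K \<ge> 0" by simp
    thus ?thesis using mu by simp
  qed
  have P0: "0 \<le> (K + mu) * \<bar>P1 - P2\<bar>" using K0 by simp
  have mixed: "\<bar>mu * A - b\<bar> \<le> mu * \<bar>A - B\<bar>" if "A \<le> 0" "B > 0" "0 \<le> b" "b \<le> mu * B" for A B b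
  proof -
    have "\<bar>A - B\<bar> = B - A" using that by simp
    hence e: "mu * \<bar>A - B\<bar> = mu * B - mu * A" by (simp add: right_diff_distrib)
    have "mu * A \<le> 0" using that mu by (simp add: mult_nonneg_nonpos)
    thus ?thesis unfolding e using that by (simp add: abs_le_iff)
  qed
  have phiS: "0 \<le> gp (c*P) / (c*P) * S \<and> gp (c*P) / (c*P) * S \<le> mu * S" if "S > 0" "S \<le> P" for S P
  proof -
    have "c * P > 0" using that c by simp
    from phi[OF this] have "0 \<le> gp (c*P) / (c*P)" "gp (c*P) / (c*P) \<le> mu" by auto
    thus ?thesis using that by (simp only: mult_right_mono mult_nonneg_nonneg less_imp_le)
  qed
  show ?thesis
  proof (cases "S1 \<le> 0")
    case s1: True
    show ?thesis
    proof (cases "S2 \<le> 0")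
      case True
      have "F S1 P1 - F S2 P2 = mu * (S1 - S2)" using neg s1 True by (simp add: right_diff_distrib)
      hence "\<bar>F S1 P1 - F S2 P2\<bar> = mu * \<bar>S1 - S2\<bar>" using mu by (simp add: abs_mult)
      thus ?thesis using P0 by linarith
    next
      case False
      hence f2: "F S2 P2 = gp (c*P2) / (c*P2) * S2" using pos S2 by simp
      have "\<bar>F S1 P1 - F S2 P2\<bar> \<le> mu * \<bar>S1 - S2\<bar>" unfolding neg[OF s1] f2
        using mixed[OF s1, of S2] phiS[of S2 P2] False S2 by simp
      thus ?thesis using P0 by linarith
    qed
  next
    case s1: False
    have f1: "F S1 P1 = gp (c*P1) / (c*P1) * S1" using pos S1 s1 by simp
    have p1: "c * P1 > 0" using s1 S1 c by simp
    show ?thesis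
    proof (cases "S2 \<le> 0")
      case True
      have "\<bar>F S2 P2 - F S1 P1\<bar> \<le> mu * \<bar>S2 - S1\<bar>" unfolding neg[OF True] f1
        using mixed[OF True, of S1] phiS[of S1 P1] s1 S1 by simp
      hence "\<bar>F S1 P1 - F S2 P2\<bar> \<le> mu * \<bar>S1 - S2\<bar>" by (simp add: abs_minus_commute)
      thus ?thesis using P0 by linarith
    next
      case False
      have f2: "F S2 P2 = gp (c*P2) / (c*P2) * S2" using pos S2 False by simp
      have p2: "c * P2 > 0" using False S2 c by simp
      define a1 where "a1 = gp (c*P1) / (c*P1)"
      define a2 where "a2 = gp (c*P2) / (c*P2)"
      have "F S1 P1 - F S2 P2 = a1 * S1 - a2 * S2"
        unfolding f1 f2 a1_def a2_def by simp
      also have "\<dots> = a1 * (S1 - S2) + (a1 - a2) * S2" by (simp add: algebra_simps)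
      finally have "F S1 P1 - F S2 P2 = a1 * (S1 - S2) + (a1 - a2) * S2" .
      hence t: "\<bar>F S1 P1 - F S2 P2\<bar> \<le> \<bar>a1 * (S1 - S2)\<bar> + \<bar>(a1 - a2) * S2\<bar>"
        by (metis abs_triangle_ineq)
      have a1b: "0 \<le> a1" "a1 \<le> mu" using phi[OF p1] unfolding a1_def by auto
      have "\<bar>a1 * (S1 - S2)\<bar> = a1 * \<bar>S1 - S2\<bar>" using a1b by (simp add: abs_mult)
      also have "\<dots> \<le> mu * \<bar>S1 - S2\<bar>" using a1b by (simp add: mult_right_mono)
      finally have m1: "\<bar>a1 * (S1 - S2)\<bar> \<le> mu * \<bar>S1 - S2\<bar>" .
      have m2: "\<bar>(a1 - a2) * S2\<bar> \<le> (K + mu) * \<bar>P1 - P2\<bar>"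
      proof -
        have "\<bar>(a1 - a2) * S2\<bar> = \<bar>a1 - a2\<bar> * S2" using False by (simp add: abs_mult)
        also have "\<dots> \<le> \<bar>a1 - a2\<bar> * P2" using S2 by (simp add: mult_left_mono)
        also have "\<dots> = (\<bar>a1 - a2\<bar> * (c*P2)) / c" using c by simp
        also have "\<dots> \<le> ((K+mu) * \<bar>c*P1 - c*P2\<bar>) / c"
          unfolding a1_def a2_def by (rule divide_right_mono[OF phi_diff[OF p1 p2 bnd lip]]) (use c in simp)
        also have "\<bar>c*P1 - c*P2\<bar> = c * \<bar>P1 - P2\<bar>"
          using c by (simp add: right_diff_distrib[symmetric] abs_mult)
        also have "((K+mu) * (c * \<bar>P1 - P2\<bar>)) / c = (K+mu) * \<bar>P1 - P2\<bar>"
          using c by simp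
        finally show ?thesis .
      qed
      show ?thesis using t m1 m2 by linarith
    qed
  qed
qed



lemma inCX_bound:
  assumes "in_CX \<Omega> T v"
  shows "\<exists>B. \<forall>t\<in>{0..T}. \<forall>x\<in>\<Omega>. norm (v t x) \<le> B"
proof -
  have loc: "\<exists>d>0. \<exists>B. \<forall>s\<in>{0..T}. \<bar>s-t\<bar> < d \<longrightarrow> (\<forall>x\<in>\<Omega>. norm (v s x) \<le> B)" if t: "t \<in> {0..T}" for t
  proof -
    have "in_X \<Omega> (v t)" using assms t unfolding in_CX_def by auto
    hence "bounded (v t ` \<Omega>)" unfolding in_X_def by auto
    then obtain M where M: "\<forall>x\<in>\<Omega>. norm (v t x) \<le> M" unfolding bounded_iff by auto
    obtain d where d: "d > 0" "\<forall>s\<in>{0..T}. \<bar>s - t\<bar> < d \<longrightarrow> (\<forall>x\<in>\<Omega>. norm (v s x - v t x) \<le> 1)"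
      using assms t unfolding in_CX_def by (meson zero_less_one)
    have "\<forall>s\<in>{0..T}. \<bar>s-t\<bar> < d \<longrightarrow> (\<forall>x\<in>\<Omega>. norm (v s x) \<le> M + 1)"
    proof (intro ballI impI)
      fix s x assume s: "s \<in> {0..T}" "\<bar>s-t\<bar> < d" and x: "x \<in> \<Omega>"
      have "norm (v s x) \<le> norm (v t x) + norm (v s x - v t x)" by (metis norm_triangle_sub add.commute)
      thus "norm (v s x) \<le> M + 1" using M d s x by fastforce
    qed
    thus ?thesis using d by blast
  qed
  then obtain d Bf where dB: "\<forall>t\<in>{0..T}. d t > 0 \<and> (\<forall>s\<in>{0..T}. \<bar>s-t\<bar> < d t \<longrightarrow> (\<forall>x\<in>\<Omega>. norm (v s x) \<le> Bf t))"
    by metis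
  have cov: "{0..T} \<subseteq> (\<Union>c\<in>{0..T}. ball c (d c))" using dB by force
  obtain C where C: "C \<subseteq> {0..T}" "finite C" "{0..T} \<subseteq> (\<Union>c\<in>C. ball c (d c))"
    using compactE_image[of "{0..T}" "{0..T}" "\<lambda>c. ball c (d c)"] cov by auto
  have "\<forall>t\<in>{0..T}. \<forall>x\<in>\<Omega>. norm (v t x) \<le> (\<Sum>c\<in>C. \<bar>Bf c\<bar>)"
  proof (intro ballI)
    fix s x assume s: "s \<in> {0..T}" and x: "x \<in> \<Omega>"
    then obtain c where c: "c \<in> C" "s \<in> ball c (d c)" using C by blast
    have "\<bar>s - c\<bar> < d c" using c by (simp add: dist_real_def)
    hence "norm (v s x) \<le> Bf c" using dB C c s x by blast
    also have "\<dots> \<le> \<bar>Bf c\<bar>" by simp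
    also have "\<dots> \<le> (\<Sum>c\<in>C. \<bar>Bf c\<bar>)" by (rule member_le_sum) (use c C in auto)
    finally show "norm (v s x) \<le> (\<Sum>c\<in>C. \<bar>Bf c\<bar>)" .
  qed
  thus ?thesis by blast
qed

lemma sup_diff:
  fixes f g :: "real \<Rightarrow> real"
  assumes "A \<noteq> {}" "bdd_above (f ` A)" "bdd_above (g ` A)" "\<forall>\<tau>\<in>A. \<bar>f \<tau> - g \<tau>\<bar> \<le> c"
  shows "\<bar>(SUP \<tau>\<in>A. f \<tau>) - (SUP \<tau>\<in>A. g \<tau>)\<bar> \<le> c"
proof -
  have "(SUP \<tau>\<in>A. f \<tau>) \<le> (SUP \<tau>\<in>A. g \<tau>) + c"
  proof (rule cSUP_least[OF assms(1)])
    fix \<tau> assume "\<tau> \<in> A"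
    thus "f \<tau> \<le> (SUP \<tau>\<in>A. g \<tau>) + c" using cSUP_upper[OF _ assms(3), of \<tau>] assms(4) by fastforce
  qed
  moreover have "(SUP \<tau>\<in>A. g \<tau>) \<le> (SUP \<tau>\<in>A. f \<tau>) + c"
  proof (rule cSUP_least[OF assms(1)])
    fix \<tau> assume "\<tau> \<in> A"
    thus "g \<tau> \<le> (SUP \<tau>\<in>A. f \<tau>) + c" using cSUP_upper[OF _ assms(2), of \<tau>] assms(4) by fastforce
  qed
  ultimately show ?thesis by linarith
qed

lemma bondS_abs: "\<bar>bondS y x v\<bar> \<le> norm (v y - v x) / norm (y - x)"
proof -
  have "\<bar>inner (v y - v x) (sgn (y - x))\<bar> \<le> norm (v y - v x) * norm (sgn (y - x))"
    by (rule Cauchy_Schwarz_ineq2)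
  also have "\<dots> \<le> norm (v y - v x)" by (simp add: norm_sgn)
  finally show ?thesis unfolding bondS_def by (simp add: abs_divide divide_right_mono)
qed

lemma bondS_diff: "bondS y x v - bondS y x w = bondS y x (\<lambda>z. v z - w z)"
  unfolding bondS_def by (simp add: inner_diff_left diff_divide_distrib)

lemma bondS_diff_bound:
  assumes "norm (v y - w y) \<le> D" "norm (v x - w x) \<le> D"
  shows "\<bar>bondS y x v - bondS y x w\<bar> \<le> 2 * D / norm (y - x)"
proof -
  have "\<bar>bondS y x v - bondS y x w\<bar> \<le> norm ((v y - w y) - (v x - w x)) / norm (y - x)"
    unfolding bondS_diff using bondS_abs[of y x "\<lambda>z. v z - w z"] by simp
  also have "\<dots> \<le> 2 * D / norm (y - x)"
  proof (rule divide_right_mono)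
    have "norm ((v y - w y) - (v x - w x)) \<le> norm (v y - w y) + norm (v x - w x)" by (rule norm_triangle_ineq4)
    thus "norm ((v y - w y) - (v x - w x)) \<le> 2 * D" using assms by simp
  qed simp
  finally show ?thesis .
qed

lemma bondS_bound:
  assumes "norm (v y) \<le> B" "norm (v x) \<le> B"
  shows "\<bar>bondS y x v\<bar> \<le> 2 * B / norm (y - x)"
  using bondS_diff_bound[of v y "\<lambda>_. 0" B x] assms unfolding bondS_def by simp

lemma Sstar_countable:
  assumes inCX: "in_CX \<Omega> T u" and y: "y \<in> \<Omega>" and x: "x \<in> \<Omega>" and t: "t \<in> {0..T}"
    and B: "\<forall>\<tau>\<in>{0..T}. \<forall>z\<in>\<Omega>. norm (u \<tau> z) \<le> B"
  shows "Sstar t y x u = (SUP \<tau>\<in>insert t ({0..t} \<inter> \<rat>). bondS y x (u \<tau>))"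
    and "bdd_above ((\<lambda>\<tau>. bondS y x (u \<tau>)) ` {0..t})"
proof -
  define f where "f \<tau> = bondS y x (u \<tau>)" for \<tau>
  define a where "a = norm (y - x)"
  define D where "D = insert t ({0..t} \<inter> \<rat>)"
  have fb: "\<bar>f \<tau>\<bar> \<le> 2 * B / a" if "\<tau> \<in> {0..t}" for \<tau>
    unfolding f_def a_def using B that t y x by (intro bondS_bound) auto
  show bdd: "bdd_above ((\<lambda>\<tau>. bondS y x (u \<tau>)) ` {0..t})"
    using fb unfolding f_def by (intro bdd_aboveI2[of _ _ "2 * B / a"]) (auto simp: abs_le_iff)
  hence bdd': "bdd_above (f ` {0..t})" unfolding f_def .
  have Dsub: "D \<subseteq> {0..t}" "D \<noteq> {}" "t \<in> D" using t unfolding D_def by auto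
  have bddD: "bdd_above (f ` D)" using bdd' Dsub by (meson bdd_above_mono image_mono)
  have ge: "(SUP \<tau>\<in>D. f \<tau>) \<le> (SUP \<tau>\<in>{0..t}. f \<tau>)"
    by (rule cSUP_subset_mono[OF Dsub(2) bdd' Dsub(1)]) simp
  have le: "(SUP \<tau>\<in>{0..t}. f \<tau>) \<le> (SUP \<tau>\<in>D. f \<tau>)"
  proof (rule cSUP_least)
    show "{0..t} \<noteq> {}" using t by auto
  next
    fix \<tau> assume tau: "\<tau> \<in> {0..t}"
    show "f \<tau> \<le> (SUP \<tau>\<in>D. f \<tau>)"
    proof (cases "a = 0")
      case True
      hence "y = x" unfolding a_def by simp
      hence "f \<tau> = f t" unfolding f_def bondS_def by simp
      thus ?thesis using cSUP_upper[OF Dsub(3) bddD] by simp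
    next
      case False
      hence a0: "a > 0" unfolding a_def by simp
      show ?thesis
      proof (rule field_le_epsilon)
        fix e :: real assume e: "e > 0"
        show "f \<tau> \<le> (SUP \<tau>\<in>D. f \<tau>) + e"
        proof (cases "\<tau> = t")
          case True
          thus ?thesis using cSUP_upper[OF Dsub(3) bddD] e by simp
        next
          case False
          hence lt: "\<tau> < t" using tau by simp
          have tT: "\<tau> \<in> {0..T}" using tau t by auto
          obtain d where d: "d > 0" "\<forall>s\<in>{0..T}. \<bar>s - \<tau>\<bar> < d \<longrightarrow> (\<forall>z\<in>\<Omega>. norm (u s z - u \<tau> z) \<le> e * a / 2)"
          proof -
            have "e * a / 2 > 0" using e a0 by simp
            thus ?thesis using that inCX tT unfolding in_CX_def by blast
          qed
          obtain q where q: "q \<in> \<rat>" "\<tau> < q" "q < min t (\<tau> + d)"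
            using Rats_dense_in_real[of \<tau> "min t (\<tau> + d)"] lt d by auto
          have qD: "q \<in> D" using q tau unfolding D_def by auto
          have qT: "q \<in> {0..T}" "\<bar>q - \<tau>\<bar> < d" using q tau t by auto
          have h1: "norm (u q y - u \<tau> y) \<le> e * a / 2" using d qT y by auto
          have h2: "norm (u q x - u \<tau> x) \<le> e * a / 2" using d qT x by auto
          have "\<bar>f q - f \<tau>\<bar> \<le> 2 * (e * a / 2) / a"
            using bondS_diff_bound[OF h1 h2] unfolding f_def a_def by simp
          also have "\<dots> = e" using a0 by simp
          finally have "f \<tau> \<le> f q + e" by simp
          also have "f q \<le> (SUP \<tau>\<in>D. f \<tau>)" by (rule cSUP_upper[OF qD bddD])
          finally show ?thesis by simp
        qed
      qed
    qed
  qed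
  show "Sstar t y x u = (SUP \<tau>\<in>insert t ({0..t} \<inter> \<rat>). bondS y x (u \<tau>))"
    using ge le unfolding Sstar_def D_def[symmetric] f_def by simp
qed



lemma meas_setup:
  fixes \<Omega> :: "'a::euclidean_space set"
  assumes "open \<Omega>"
  shows "\<Omega> \<in> sets lebesgue" "(\<lambda>y. y) \<in> borel_measurable (restrict_space lebesgue \<Omega>)"
    "space (restrict_space lebesgue \<Omega>) = \<Omega>" "\<Omega> \<in> sets (restrict_space lebesgue \<Omega>)"
proof -
  show o: "\<Omega> \<in> sets lebesgue" using borel_open[OF assms] by simp
  show "(\<lambda>y. y) \<in> borel_measurable (restrict_space lebesgue \<Omega>)"
    by (intro measurable_restrict_space1 measurable_completion) simp
  show "space (restrict_space lebesgue \<Omega>) = \<Omega>" by simp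
  thus "\<Omega> \<in> sets (restrict_space lebesgue \<Omega>)" by (metis sets.top)
qed

lemma inX_meas:
  fixes \<Omega> :: "'a::euclidean_space set"
  assumes "open \<Omega>" "in_X \<Omega> v"
  shows "v \<in> borel_measurable (restrict_space lebesgue \<Omega>)"
proof -
  have "\<Omega> \<inter> space lebesgue \<in> sets lebesgue" using meas_setup(1)[OF assms(1)] by simp
  thus ?thesis using assms(2) unfolding in_X_def set_borel_measurable_def
    by (subst borel_measurable_restrict_space_iff) auto
qed

lemma bondS_meas:
  fixes \<Omega> :: "'a::euclidean_space set"
  assumes "open \<Omega>" "v \<in> borel_measurable (restrict_space lebesgue \<Omega>)"
  shows "(\<lambda>y. bondS y x v) \<in> borel_measurable (restrict_space lebesgue \<Omega>)"
proof -
  note [measurable] = assms(2) meas_setup(2)[OF assms(1)]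
  show ?thesis unfolding bondS_def by measurable
qed

lemma Sstar_meas:
  fixes \<Omega> :: "'a::euclidean_space set"
  assumes o: "open \<Omega>" and inCX: "in_CX \<Omega> T u" and x: "x \<in> \<Omega>" and t: "t \<in> {0..T}"
  shows "(\<lambda>y. Sstar t y x u) \<in> borel_measurable (restrict_space lebesgue \<Omega>)"
proof -
  obtain B where B: "\<forall>\<tau>\<in>{0..T}. \<forall>z\<in>\<Omega>. norm (u \<tau> z) \<le> B" using inCX_bound[OF inCX] by blast
  define D where "D = insert t ({0..t} \<inter> \<rat>)"
  have Dsub: "D \<subseteq> {0..T}" using t unfolding D_def by auto
  have cD: "countable D" unfolding D_def by (simp add: countable_rat)
  have m: "(\<lambda>y. bondS y x (u \<tau>)) \<in> borel_measurable (restrict_space lebesgue \<Omega>)" if "\<tau> \<in> D" for \<tau>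
    using that Dsub inCX by (intro bondS_meas o inX_meas) (auto simp: in_CX_def)
  have "(\<lambda>y. SUP \<tau>\<in>D. bondS y x (u \<tau>)) \<in> borel_measurable (restrict_space lebesgue \<Omega>)"
  proof (rule borel_measurable_cSUP[OF cD m])
    fix y assume "y \<in> space (restrict_space lebesgue \<Omega>)"
    hence y: "y \<in> \<Omega>" by simp
    have "D \<subseteq> {0..t}" using t unfolding D_def by auto
    thus "bdd_above ((\<lambda>\<tau>. bondS y x (u \<tau>)) ` D)"
      using Sstar_countable(2)[OF inCX y x t B] by (meson bdd_above_mono image_mono)
  qed
  thus ?thesis
    by (rule measurable_cong[THEN iffD1, rotated])
       (use Sstar_countable(1)[OF inCX _ x t B] in \<open>auto simp: D_def\<close>)
qed

lemma antimono_meas: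
  fixes J :: "real \<Rightarrow> real"
  assumes J_pos: "\<forall>r. 0 \<le> r \<and> r < 1 \<longrightarrow> J r > 0"
    and J_dec: "\<forall>r s. 0 \<le> r \<and> r \<le> s \<and> s < 1 \<longrightarrow> J s \<le> J r"
    and J_zero: "\<forall>r. r \<ge> 1 \<longrightarrow> J r = 0"
  shows "(\<lambda>r. J (max r 0)) \<in> borel_measurable borel"
proof -
  have "mono (\<lambda>r. - J (max r 0))"
  proof (rule monoI)
    fix r s :: real assume rs: "r \<le> s"
    have "J (max s 0) \<le> J (max r 0)"
    proof (cases "max s 0 < 1")
      case True
      thus ?thesis using J_dec rs by (auto simp: max_def)
    next
      case False
      hence "J (max s 0) = 0" using J_zero by auto
      moreover have "J (max r 0) \<ge> 0" using J_pos J_zero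
        by (cases "max r 0 < 1") (auto simp: max_def less_imp_le not_less split: if_splits)
      ultimately show ?thesis by simp
    qed
    thus "- J (max r 0) \<le> - J (max s 0)" by simp
  qed
  hence "(\<lambda>r. - J (max r 0)) \<in> borel_measurable borel" by (rule borel_measurable_mono)
  hence "(\<lambda>r. - (- J (max r 0))) \<in> borel_measurable borel" by measurable
  thus ?thesis by simp
qed

lemma lip_cont:
  fixes gp :: "real \<Rightarrow> real"
  assumes lip: "\<forall>r s. 0 \<le> r \<and> 0 \<le> s \<longrightarrow> \<bar>gp r - gp s\<bar> \<le> K * \<bar>r - s\<bar>"
  shows "(\<lambda>r. gp (max r 0)) \<in> borel_measurable borel"
proof -
  have K: "K \<ge> 0"
  proof -
    have "\<bar>gp 0 - gp 1\<bar> \<le> K * \<bar>0 - 1\<bar>" using lip[rule_format, of 0 1] by simp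
    thus ?thesis by simp
  qed
  have "lipschitz_on K UNIV (\<lambda>r. gp (max r 0))"
    unfolding lipschitz_on_def
  proof (intro conjI K ballI)
    fix r s :: real
    have "\<bar>gp (max r 0) - gp (max s 0)\<bar> \<le> K * \<bar>max r 0 - max s 0\<bar>" using lip by auto
    also have "\<dots> \<le> K * \<bar>r - s\<bar>" using K by (intro mult_left_mono) (auto simp: max_def)
    finally show "dist (gp (max r 0)) (gp (max s 0)) \<le> K * dist r s" by (simp add: dist_real_def)
  qed
  hence "continuous_on UNIV (\<lambda>r. gp (max r 0))" by (rule lipschitz_on_continuous_on)
  thus ?thesis by (rule borel_measurable_continuous_onI)
qed

lemma rho_meas:
  fixes \<Omega> :: "'a::euclidean_space set" and J :: "real \<Rightarrow> real"
  assumes o: "open \<Omega>" and eps: "\<epsilon> > 0"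
    and J_pos: "\<forall>r. 0 \<le> r \<and> r < 1 \<longrightarrow> J r > 0"
    and J_dec: "\<forall>r s. 0 \<le> r \<and> r \<le> s \<and> s < 1 \<longrightarrow> J s \<le> J r"
    and J_zero: "\<forall>r. r \<ge> 1 \<longrightarrow> J r = 0"
  shows "(\<lambda>y. rho \<Omega> J \<epsilon> y x) \<in> borel_measurable (restrict_space lebesgue \<Omega>)"
proof -
  define J' where "J' = (\<lambda>r. J (max r 0))"
  note [measurable] = antimono_meas[OF J_pos J_dec J_zero, folded J'_def] meas_setup(2,4)[OF o]
  have e: "rho \<Omega> J \<epsilon> y x = indicator \<Omega> y * J' (norm (y - x) / \<epsilon>)
      / (\<epsilon> * (measure lborel (ball (0::'a) 1) * \<epsilon> ^ DIM('a)))" for y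
  proof -
    have "max (norm (y - x) / \<epsilon>) 0 = norm (y - x) / \<epsilon>" using eps by simp
    thus ?thesis unfolding rho_def J'_def by simp
  qed
  show ?thesis unfolding e by measurable
qed

lemma force_meas:
  fixes \<Omega> :: "'a::euclidean_space set" and J gp :: "real \<Rightarrow> real"
  assumes o: "open \<Omega>" and eps: "\<epsilon> > 0"
    and J_pos: "\<forall>r. 0 \<le> r \<and> r < 1 \<longrightarrow> J r > 0"
    and J_dec: "\<forall>r s. 0 \<le> r \<and> r \<le> s \<and> s < 1 \<longrightarrow> J s \<le> J r"
    and J_zero: "\<forall>r. r \<ge> 1 \<longrightarrow> J r = 0"
    and lip: "\<forall>r s. 0 \<le> r \<and> 0 \<le> s \<longrightarrow> \<bar>gp r - gp s\<bar> \<le> K * \<bar>r - s\<bar>"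
    and rL: "rL > 0"
    and inCX: "in_CX \<Omega> T u" and x: "x \<in> \<Omega>" and t: "t \<in> {0..T}"
  shows "(\<lambda>y. force \<Omega> J \<epsilon> gp mu rL L t y x u) \<in> borel_measurable (restrict_space lebesgue \<Omega>)"
proof -
  define gp' where "gp' = (\<lambda>r. gp (max r 0))"
  have ut: "u t \<in> borel_measurable (restrict_space lebesgue \<Omega>)"
    using inCX t o by (intro inX_meas) (auto simp: in_CX_def)
  note [measurable] = lip_cont[OF lip, folded gp'_def] meas_setup(2,4)[OF o]
    rho_meas[OF o eps J_pos J_dec J_zero] Sstar_meas[OF o inCX x t] bondS_meas[OF o ut]
  have ph: "(if r \<le> rL then 1 else gp r / (mu * r)) = (if r \<le> rL then 1 else gp' r / (mu * r))" for r
    unfolding gp'_def using rL by (simp add: max_def)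
  have e: "force \<Omega> J \<epsilon> gp mu rL L t y x u =
     (rho \<Omega> J \<epsilon> y x * (if bondS y x (u t) \<le> 0 then mu else mu *
        (if sqrt (norm (y - x) / L) * Sstar t y x u \<le> rL then 1
         else gp' (sqrt (norm (y - x) / L) * Sstar t y x u) / (mu * (sqrt (norm (y - x) / L) * Sstar t y x u))))
      * bondS y x (u t)) *\<^sub>R sgn (y - x)" for y
    unfolding force_def stiff_def phase_def rstar_def Let_def ph ..
  show ?thesis unfolding e by measurable
qed



lemma J_nonneg:
  fixes J :: "real \<Rightarrow> real"
  assumes J_pos: "\<forall>r. 0 \<le> r \<and> r < 1 \<longrightarrow> J r > 0" and J_zero: "\<forall>r. r \<ge> 1 \<longrightarrow> J r = 0" and "r \<ge> 0"
  shows "J r \<ge> 0"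
  using assms by (cases "r < 1") (auto simp: less_imp_le not_less)

lemma rho_bounds:
  fixes \<Omega> :: "'a::euclidean_space set" and J :: "real \<Rightarrow> real"
  assumes eps: "\<epsilon> > 0"
    and J_pos: "\<forall>r. 0 \<le> r \<and> r < 1 \<longrightarrow> J r > 0"
    and J_dec: "\<forall>r s. 0 \<le> r \<and> r \<le> s \<and> s < 1 \<longrightarrow> J s \<le> J r"
    and J_zero: "\<forall>r. r \<ge> 1 \<longrightarrow> J r = 0"
  shows "0 \<le> rho \<Omega> J \<epsilon> y x"
    and "rho \<Omega> J \<epsilon> y x \<le> J 0 / (\<epsilon> * (measure lborel (ball (0::'a) 1) * \<epsilon> ^ DIM('a))) * indicator (cball x \<epsilon>) y"
proof -
  define c where "c = \<epsilon> * (measure lborel (ball (0::'a) 1) * \<epsilon> ^ DIM('a))"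
  have c: "c \<ge> 0" unfolding c_def using eps by simp
  have a0: "norm (y - x) / \<epsilon> \<ge> 0" using eps by simp
  have Jn: "J (norm (y - x) / \<epsilon>) \<ge> 0" by (rule J_nonneg[OF J_pos J_zero a0])
  show "0 \<le> rho \<Omega> J \<epsilon> y x" unfolding rho_def c_def[symmetric] using c Jn by simp
  have J00: "J 0 \<ge> 0" using J_nonneg[OF J_pos J_zero, of 0] by simp
  have "indicator \<Omega> y * J (norm (y - x) / \<epsilon>) \<le> J 0 * indicator (cball x \<epsilon>) y"
  proof (cases "norm (y - x) \<le> \<epsilon>")
    case True
    hence yin: "y \<in> cball x \<epsilon>" by (simp add: dist_norm norm_minus_commute)
    have "J (norm (y - x) / \<epsilon>) \<le> J 0"
    proof (cases "norm (y - x) / \<epsilon> < 1")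
      case True
      thus ?thesis using J_dec a0 by auto
    next
      case False
      thus ?thesis using J_zero J00 by (auto simp: not_less)
    qed
    thus ?thesis using yin Jn by (auto simp: indicator_def)
  next
    case False
    hence "norm (y - x) / \<epsilon> \<ge> 1" using eps by (simp add: field_simps)
    hence "J (norm (y - x) / \<epsilon>) = 0" using J_zero by auto
    thus ?thesis using J00 by (simp add: indicator_def)
  qed
  thus "rho \<Omega> J \<epsilon> y x \<le> J 0 / (\<epsilon> * (measure lborel (ball (0::'a) 1) * \<epsilon> ^ DIM('a))) * indicator (cball x \<epsilon>) y"
    unfolding rho_def c_def[symmetric] using c by (simp add: divide_right_mono)
qed

lemma rho_div_integrable:
  fixes \<Omega> :: "'a::euclidean_space set" and J :: "real \<Rightarrow> real"
  assumes o: "open \<Omega>" and eps: "\<epsilon> > 0" and d: "DIM('a) \<ge> 2"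
    and J_pos: "\<forall>r. 0 \<le> r \<and> r < 1 \<longrightarrow> J r > 0"
    and J_dec: "\<forall>r s. 0 \<le> r \<and> r \<le> s \<and> s < 1 \<longrightarrow> J s \<le> J r"
    and J_zero: "\<forall>r. r \<ge> 1 \<longrightarrow> J r = 0"
  shows "integrable (restrict_space lebesgue \<Omega>) (\<lambda>y. rho \<Omega> J \<epsilon> y x / norm (y - x))"
proof -
  define c where "c = J 0 / (\<epsilon> * (measure lborel (ball (0::'a) 1) * \<epsilon> ^ DIM('a)))"
  define g where "g y = c * (indicator (cball x \<epsilon>) y / norm (y - x))" for y
  have cbm[measurable]: "cball x \<epsilon> \<in> sets borel" by simp
  have gm: "g \<in> borel_measurable lborel" unfolding g_def by measurable
  have "integrable lborel g" unfolding g_def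
    by (intro integrable_mult_right inv_norm_integrable eps d)
  hence "integrable lebesgue g" using integrable_completion[OF gm] by simp
  hence "integrable lebesgue (\<lambda>y. indicator \<Omega> y *\<^sub>R g y)"
    by (intro integrable_mult_indicator meas_setup(1)[OF o])
  hence gi: "integrable (restrict_space lebesgue \<Omega>) g"
    by (subst integrable_restrict_space) (use meas_setup(1)[OF o] in auto)
  note [measurable] = rho_meas[OF o eps J_pos J_dec J_zero] meas_setup(2)[OF o]
  show ?thesis
  proof (rule Bochner_Integration.integrable_bound[OF gi])
    show "(\<lambda>y. rho \<Omega> J \<epsilon> y x / norm (y - x)) \<in> borel_measurable (restrict_space lebesgue \<Omega>)"
      by measurable
    show "AE y in restrict_space lebesgue \<Omega>. norm (rho \<Omega> J \<epsilon> y x / norm (y - x)) \<le> norm (g y)"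
    proof (rule AE_I2)
      fix y
      have r0: "0 \<le> rho \<Omega> J \<epsilon> y x" and r1: "rho \<Omega> J \<epsilon> y x \<le> c * indicator (cball x \<epsilon>) y"
        using rho_bounds[OF eps J_pos J_dec J_zero, of \<Omega> y x] unfolding c_def by auto
      have "norm (rho \<Omega> J \<epsilon> y x / norm (y - x)) = rho \<Omega> J \<epsilon> y x / norm (y - x)" using r0 by simp
      also have "\<dots> \<le> c * indicator (cball x \<epsilon>) y / norm (y - x)" using r1 by (simp add: divide_right_mono)
      also have "\<dots> \<le> norm (g y)" unfolding g_def by (simp add: divide_right_mono)
      finally show "norm (rho \<Omega> J \<epsilon> y x / norm (y - x)) \<le> norm (g y)" .
    qed
  qed
qed



lemma stiff_bounds:
  fixes gp :: "real \<Rightarrow> real"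
  assumes mu: "mu > 0" and rL: "rL > 0" and bnd: "\<forall>r. r \<ge> 0 \<longrightarrow> 0 \<le> gp r \<and> gp r \<le> mu * r"
  shows "0 \<le> stiff gp mu rL L u y x t \<and> stiff gp mu rL L u y x t \<le> mu"
proof -
  have "0 \<le> phase gp mu rL L u y x t \<and> phase gp mu rL L u y x t \<le> 1"
  proof -
    define r where "r = rstar L t y x u"
    show ?thesis
    proof (cases "r \<le> rL")
      case True thus ?thesis unfolding phase_def r_def[symmetric] Let_def by simp
    next
      case False
      hence r0: "r > 0" using rL by simp
      hence "0 \<le> gp r" "gp r \<le> mu * r" using bnd by auto
      hence "0 \<le> gp r / (mu * r)" "gp r / (mu * r) \<le> 1" using r0 mu by (auto simp: divide_le_eq)
      thus ?thesis using False unfolding phase_def r_def[symmetric] Let_def by simp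
    qed
  qed
  thus ?thesis using mu unfolding stiff_def by (auto simp: mult_le_cancel_left1)
qed

lemma force_eq:
  "force \<Omega> J \<epsilon> gp mu rL L t y x u = (rho \<Omega> J \<epsilon> y x * (stiff gp mu rL L u y x t * bondS y x (u t))) *\<^sub>R sgn (y - x)"
  unfolding force_def by (simp add: mult.assoc)

lemma force_diff_pointwise:
  fixes \<Omega> :: "'a::euclidean_space set" and J gp :: "real \<Rightarrow> real"
  assumes mu: "mu > 0" and rL: "rL > 0" and Lp: "L > 0"
    and lin: "\<forall>r. 0 \<le> r \<and> r \<le> rL \<longrightarrow> gp r = mu * r"
    and bnd: "\<forall>r. r \<ge> 0 \<longrightarrow> 0 \<le> gp r \<and> gp r \<le> mu * r"
    and lip: "\<forall>r s. 0 \<le> r \<and> 0 \<le> s \<longrightarrow> \<bar>gp r - gp s\<bar> \<le> K * \<bar>r - s\<bar>"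
    and iu: "in_CX \<Omega> T u" and iw: "in_CX \<Omega> T w" and x: "x \<in> \<Omega>" and y: "y \<in> \<Omega>" and t: "t \<in> {0..T}"
    and Db: "\<forall>\<tau>\<in>{0..T}. \<forall>z\<in>\<Omega>. norm (u \<tau> z - w \<tau> z) \<le> D"
    and r0: "0 \<le> rho \<Omega> J \<epsilon> y x"
  shows "norm (force \<Omega> J \<epsilon> gp mu rL L t y x u - force \<Omega> J \<epsilon> gp mu rL L t y x w)
          \<le> (2 * (2 * mu + K)) * D * (rho \<Omega> J \<epsilon> y x / norm (y - x))"
proof (cases "y = x")
  case True
  thus ?thesis unfolding force_def by simp
next
  case False
  define a where "a = norm (y - x)"
  have a0: "a > 0" using False unfolding a_def by simp
  have K0: "K \<ge> 0"
  proof -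
    have "\<bar>gp 0 - gp 1\<bar> \<le> K * \<bar>0 - 1\<bar>" using lip[rule_format, of 0 1] by simp
    thus ?thesis by simp
  qed
  obtain Bu where Bu: "\<forall>\<tau>\<in>{0..T}. \<forall>z\<in>\<Omega>. norm (u \<tau> z) \<le> Bu" using inCX_bound[OF iu] by blast
  obtain Bw where Bw: "\<forall>\<tau>\<in>{0..T}. \<forall>z\<in>\<Omega>. norm (w \<tau> z) \<le> Bw" using inCX_bound[OF iw] by blast
  have bu: "bdd_above ((\<lambda>\<tau>. bondS y x (u \<tau>)) ` {0..t})" by (rule Sstar_countable(2)[OF iu y x t Bu])
  have bw: "bdd_above ((\<lambda>\<tau>. bondS y x (w \<tau>)) ` {0..t})" by (rule Sstar_countable(2)[OF iw y x t Bw])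
  have t0: "t \<in> {0..t}" using t by simp
  have SPu: "bondS y x (u t) \<le> Sstar t y x u" unfolding Sstar_def by (rule cSUP_upper[OF t0 bu])
  have SPw: "bondS y x (w t) \<le> Sstar t y x w" unfolding Sstar_def by (rule cSUP_upper[OF t0 bw])
  define c where "c = sqrt (norm (y - x) / L)"
  have c0: "c > 0" unfolding c_def using False Lp by simp
  have key: "\<bar>stiff gp mu rL L u y x t * bondS y x (u t) - stiff gp mu rL L w y x t * bondS y x (w t)\<bar>
     \<le> mu * \<bar>bondS y x (u t) - bondS y x (w t)\<bar> + (K + mu) * \<bar>Sstar t y x u - Sstar t y x w\<bar>"
    using scalar_key[OF c0 mu SPu SPw lin bnd lip]
    unfolding stiff_def phase_def rstar_def Let_def c_def by simp
  have dS: "\<bar>bondS y x (u t) - bondS y x (w t)\<bar> \<le> 2 * D / a"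
    unfolding a_def by (rule bondS_diff_bound) (use Db t x y in auto)
  have dP: "\<bar>Sstar t y x u - Sstar t y x w\<bar> \<le> 2 * D / a"
    unfolding Sstar_def
  proof (rule sup_diff[OF _ bu bw])
    show "{0..t} \<noteq> {}" using t by auto
    show "\<forall>\<tau>\<in>{0..t}. \<bar>bondS y x (u \<tau>) - bondS y x (w \<tau>)\<bar> \<le> 2 * D / a"
      unfolding a_def using Db t x y by (intro ballI bondS_diff_bound) auto
  qed
  define Fu where "Fu = stiff gp mu rL L u y x t * bondS y x (u t)"
  define Fw where "Fw = stiff gp mu rL L w y x t * bondS y x (w t)"
  have "\<bar>Fu - Fw\<bar> \<le> mu * (2 * D / a) + (K + mu) * (2 * D / a)"
  proof -
    have "mu * \<bar>bondS y x (u t) - bondS y x (w t)\<bar> \<le> mu * (2 * D / a)"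
      using dS mu by (intro mult_left_mono) auto
    moreover have "(K + mu) * \<bar>Sstar t y x u - Sstar t y x w\<bar> \<le> (K + mu) * (2 * D / a)"
      using dP mu K0 by (intro mult_left_mono) auto
    ultimately show ?thesis using key unfolding Fu_def Fw_def by linarith
  qed
  also have "\<dots> = (2 * (2 * mu + K)) * D / a" using a0 by (simp add: field_simps add_divide_distrib[symmetric])
  finally have FF: "\<bar>Fu - Fw\<bar> \<le> (2 * (2 * mu + K)) * D / a" .
  have "force \<Omega> J \<epsilon> gp mu rL L t y x u - force \<Omega> J \<epsilon> gp mu rL L t y x w
        = (rho \<Omega> J \<epsilon> y x * (Fu - Fw)) *\<^sub>R sgn (y - x)"
    unfolding force_eq Fu_def Fw_def by (simp add: algebra_simps)
  hence "norm (force \<Omega> J \<epsilon> gp mu rL L t y x u - force \<Omega> J \<epsilon> gp mu rL L t y x w)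
        = rho \<Omega> J \<epsilon> y x * \<bar>Fu - Fw\<bar>"
    using False r0 by (simp add: norm_sgn abs_mult)
  also have "\<dots> \<le> rho \<Omega> J \<epsilon> y x * ((2 * (2 * mu + K)) * D / a)"
    using FF r0 by (rule mult_left_mono)
  also have "\<dots> = (2 * (2 * mu + K)) * D * (rho \<Omega> J \<epsilon> y x / norm (y - x))"
    unfolding a_def by simp
  finally show ?thesis .
qed



theorem mainTheorem3:
  fixes \<Omega> :: "'a::euclidean_space set" and J gp :: "real \<Rightarrow> real"
    and \<epsilon> L mu rL rC rF T :: real
  assumes dim: "DIM('a) \<in> {2, 3}"
    and dom: "open \<Omega>" "connected \<Omega>" "bounded \<Omega>" "\<Omega> \<noteq> {}"
    and pars: "\<epsilon> > 0" "L > 0" "mu > 0"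
    and J_pos: "\<forall>r. 0 \<le> r \<and> r < 1 \<longrightarrow> J r > 0"
    and J_dec: "\<forall>r s. 0 \<le> r \<and> r \<le> s \<and> s < 1 \<longrightarrow> J s \<le> J r"
    and J_zero: "\<forall>r. r \<ge> 1 \<longrightarrow> J r = 0"
    and radii: "0 < rL" "rL \<le> rC" "rC < rF"
    and g_lin: "\<forall>r. 0 \<le> r \<and> r \<le> rL \<longrightarrow> gp r = mu * r"
    and g_zero: "\<forall>r. r \<ge> rF \<longrightarrow> gp r = 0"
    and g_bounds: "\<forall>r. r \<ge> 0 \<longrightarrow> 0 \<le> gp r \<and> gp r \<le> mu * r"
    and g_harden: "\<forall>r s. 0 \<le> r \<and> r \<le> s \<and> s \<le> rC \<longrightarrow> gp r \<le> gp s"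
    and g_soften: "\<forall>r s. rC \<le> r \<and> r \<le> s \<and> s \<le> rF \<longrightarrow> gp s \<le> gp r"
    and g_lip: "\<exists>K. \<forall>r s. 0 \<le> r \<and> 0 \<le> s \<longrightarrow> \<bar>gp r - gp s\<bar> \<le> K * \<bar>r - s\<bar>"
    and T_pos: "T > 0"
  shows "\<exists>C. \<forall>u w. in_CX \<Omega> T u \<longrightarrow> in_CX \<Omega> T w \<longrightarrow>
           (\<forall>t\<in>{0..T}. \<forall>x\<in>\<Omega>.
              norm (Leps \<Omega> J \<epsilon> gp mu rL L u t x - Leps \<Omega> J \<epsilon> gp mu rL L w t x)
              \<le> C * CXnorm \<Omega> T (\<lambda>t x. u t x - w t x)
                  * set_lebesgue_integral lebesgue \<Omega> (\<lambda>y. rho \<Omega> J \<epsilon> y x / norm (y - x)))"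
proof -
  obtain K where lip: "\<forall>r s. 0 \<le> r \<and> 0 \<le> s \<longrightarrow> \<bar>gp r - gp s\<bar> \<le> K * \<bar>r - s\<bar>" using g_lip by blast
  have d2: "DIM('a) \<ge> 2" using dim by auto
  define N where "N = restrict_space lebesgue \<Omega>"
  have Os: "\<Omega> \<inter> space lebesgue \<in> sets lebesgue" using meas_setup(1)[OF dom(1)] by simp
  have setint: "set_lebesgue_integral lebesgue \<Omega> f = integral\<^sup>L N f" for f :: "'a \<Rightarrow> 'b::{banach, second_countable_topology}"
    unfolding N_def set_lebesgue_integral_def by (rule integral_restrict_space[OF Os, symmetric])
  show ?thesis
  proof (intro exI[of _ "2 * (2 * mu + K)"] allI impI ballI)
    fix u w t x
    assume iu: "in_CX \<Omega> T u" and iw: "in_CX \<Omega> T w" and t: "t \<in> {0..T}" and x: "x \<in> \<Omega>"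
    define C where "C = 2 * (2 * mu + K)"
    define D where "D = CXnorm \<Omega> T (\<lambda>t x. u t x - w t x)"
    obtain Bu where Bu: "\<forall>\<tau>\<in>{0..T}. \<forall>z\<in>\<Omega>. norm (u \<tau> z) \<le> Bu" using inCX_bound[OF iu] by blast
    obtain Bw where Bw: "\<forall>\<tau>\<in>{0..T}. \<forall>z\<in>\<Omega>. norm (w \<tau> z) \<le> Bw" using inCX_bound[OF iw] by blast
    have Db: "\<forall>\<tau>\<in>{0..T}. \<forall>z\<in>\<Omega>. norm (u \<tau> z - w \<tau> z) \<le> D"
    proof (intro ballI)
      fix \<tau> z assume tau: "\<tau> \<in> {0..T}" and z: "z \<in> \<Omega>"
      have inb: "norm (u s y - w s y) \<le> Bu + Bw" if "s \<in> {0..T}" "y \<in> \<Omega>" for s y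
        using Bu Bw that norm_triangle_ineq4[of "u s y" "w s y"] by fastforce
      have bi: "bdd_above ((\<lambda>y. norm (u s y - w s y)) ` \<Omega>)" if "s \<in> {0..T}" for s
        using inb that by (intro bdd_aboveI2[of _ _ "Bu + Bw"]) auto
      have bo: "bdd_above ((\<lambda>s. SUP y\<in>\<Omega>. norm (u s y - w s y)) ` {0..T})"
      proof (intro bdd_aboveI2[of _ _ "Bu + Bw"])
        fix s assume "s \<in> {0..T}"
        thus "(SUP y\<in>\<Omega>. norm (u s y - w s y)) \<le> Bu + Bw"
          using inb dom(4) by (intro cSUP_least) auto
      qed
      have "norm (u \<tau> z - w \<tau> z) \<le> (SUP y\<in>\<Omega>. norm (u \<tau> y - w \<tau> y))"
        by (rule cSUP_upper[OF z bi[OF tau]])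
      also have "\<dots> \<le> (SUP s\<in>{0..T}. SUP y\<in>\<Omega>. norm (u s y - w s y))"
        by (rule cSUP_upper[OF tau bo])
      finally show "norm (u \<tau> z - w \<tau> z) \<le> D" unfolding D_def CXnorm_def .
    qed
    define h where "h y = rho \<Omega> J \<epsilon> y x / norm (y - x)" for y
    have hi: "integrable N h" unfolding N_def h_def
      by (rule rho_div_integrable[OF dom(1) pars(1) d2 J_pos J_dec J_zero])
    have r0: "0 \<le> rho \<Omega> J \<epsilon> y x" for y using rho_bounds(1)[OF pars(1) J_pos J_dec J_zero] .
    have fint: "integrable N (\<lambda>y. force \<Omega> J \<epsilon> gp mu rL L t y x v)"
      if iv: "in_CX \<Omega> T v" for v
    proof -
      obtain Bv where Bv: "\<forall>\<tau>\<in>{0..T}. \<forall>z\<in>\<Omega>. norm (v \<tau> z) \<le> Bv" using inCX_bound[OF iv] by blast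
      show ?thesis
      proof (rule Bochner_Integration.integrable_bound[OF integrable_mult_right[OF hi, of "2 * mu * Bv"]])
        show "(\<lambda>y. force \<Omega> J \<epsilon> gp mu rL L t y x v) \<in> borel_measurable N"
          unfolding N_def by (rule force_meas[OF dom(1) pars(1) J_pos J_dec J_zero lip radii(1) iv x t])
        show "AE y in N. norm (force \<Omega> J \<epsilon> gp mu rL L t y x v) \<le> norm (2 * mu * Bv * h y)"
        proof (rule AE_I2)
          fix y assume "y \<in> space N"
          hence y: "y \<in> \<Omega>" unfolding N_def by simp
          have sb: "0 \<le> stiff gp mu rL L v y x t" "stiff gp mu rL L v y x t \<le> mu"
            using stiff_bounds[OF pars(3) radii(1) g_bounds, of L v y x t] by auto
          have Sb: "\<bar>bondS y x (v t)\<bar> \<le> 2 * Bv / norm (y - x)"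
            using Bv t x y by (intro bondS_bound) auto
          have "norm (force \<Omega> J \<epsilon> gp mu rL L t y x v)
              \<le> rho \<Omega> J \<epsilon> y x * (stiff gp mu rL L v y x t * \<bar>bondS y x (v t)\<bar>)"
          proof -
            have "norm (force \<Omega> J \<epsilon> gp mu rL L t y x v)
                = \<bar>rho \<Omega> J \<epsilon> y x * (stiff gp mu rL L v y x t * bondS y x (v t))\<bar> * norm (sgn (y - x))"
              unfolding force_eq by simp
            also have "\<dots> \<le> \<bar>rho \<Omega> J \<epsilon> y x * (stiff gp mu rL L v y x t * bondS y x (v t))\<bar>"
              by (simp add: norm_sgn)
            also have "\<dots> = rho \<Omega> J \<epsilon> y x * (stiff gp mu rL L v y x t * \<bar>bondS y x (v t)\<bar>)"
              using r0[of y] sb by (simp add: abs_mult)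
            finally show ?thesis .
          qed
          also have "\<dots> \<le> rho \<Omega> J \<epsilon> y x * (mu * (2 * Bv / norm (y - x)))"
            using sb Sb r0[of y] pars(3) by (intro mult_left_mono mult_mono) auto
          also have "\<dots> = 2 * mu * Bv * h y" unfolding h_def by simp
          also have "\<dots> \<le> norm (2 * mu * Bv * h y)" by simp
          finally show "norm (force \<Omega> J \<epsilon> gp mu rL L t y x v) \<le> norm (2 * mu * Bv * h y)" .
        qed
      qed
    qed
    have iU: "integrable N (\<lambda>y. force \<Omega> J \<epsilon> gp mu rL L t y x u)" by (rule fint[OF iu])
    have iW: "integrable N (\<lambda>y. force \<Omega> J \<epsilon> gp mu rL L t y x w)" by (rule fint[OF iw])
    have "Leps \<Omega> J \<epsilon> gp mu rL L u t x - Leps \<Omega> J \<epsilon> gp mu rL L w t x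
        = - (integral\<^sup>L N (\<lambda>y. force \<Omega> J \<epsilon> gp mu rL L t y x u - force \<Omega> J \<epsilon> gp mu rL L t y x w))"
      unfolding Leps_def setint using Bochner_Integration.integral_diff[OF iU iW] by simp
    hence "norm (Leps \<Omega> J \<epsilon> gp mu rL L u t x - Leps \<Omega> J \<epsilon> gp mu rL L w t x)
        = norm (integral\<^sup>L N (\<lambda>y. force \<Omega> J \<epsilon> gp mu rL L t y x u - force \<Omega> J \<epsilon> gp mu rL L t y x w))"
      by simp
    also have "\<dots> \<le> integral\<^sup>L N (\<lambda>y. C * D * h y)"
    proof (rule Bochner_Integration.integral_norm_bound_integral)
      show "integrable N (\<lambda>y. force \<Omega> J \<epsilon> gp mu rL L t y x u - force \<Omega> J \<epsilon> gp mu rL L t y x w)"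
        using iU iW by simp
      show "integrable N (\<lambda>y. C * D * h y)" using hi by simp
      fix y assume "y \<in> space N"
      hence y: "y \<in> \<Omega>" unfolding N_def by simp
      show "norm (force \<Omega> J \<epsilon> gp mu rL L t y x u - force \<Omega> J \<epsilon> gp mu rL L t y x w) \<le> C * D * h y"
        unfolding C_def h_def
        by (rule force_diff_pointwise[OF pars(3) radii(1) pars(2) g_lin g_bounds lip iu iw x y t Db r0])
    qed
    also have "\<dots> = C * D * integral\<^sup>L N h" by simp
    also have "integral\<^sup>L N h = set_lebesgue_integral lebesgue \<Omega> (\<lambda>y. rho \<Omega> J \<epsilon> y x / norm (y - x))"
      unfolding setint h_def ..
    finally show "norm (Leps \<Omega> J \<epsilon> gp mu rL L u t x - Leps \<Omega> J \<epsilon> gp mu rL L w t x)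
              \<le> 2 * (2 * mu + K) * CXnorm \<Omega> T (\<lambda>t x. u t x - w t x)
                  * set_lebesgue_integral lebesgue \<Omega> (\<lambda>y. rho \<Omega> J \<epsilon> y x / norm (y - x))"
      unfolding C_def D_def .
  qed
qed

end
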